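(* Let $G_1,\ldots,G_p$ be positive (entrywise) real $m\times n$ matrices, let $R_1,\ldots,R_p$ be positive real $m$-vectors and $C_1,\ldots,C_p$ positive real $n$-vectors such that $|R_1|=\cdots=|R_p|=|C_1|=\cdots=|C_p|$. Let $\alpha_1,\ldots,\alpha_p\ge0$ with $\sum_k\alpha_k=1$, and set $G=\sum_k\alpha_kG_k$, $R=\sum_k\alpha_kR_k$, $C=\sum_k\alpha_kC_k$. Then $$f(G;R,C)\ \ge\ \prod_{k=1}^p f^{\alpha_k}(G_k;R_k,C_k).$$
   Context: For a vector $B=(b_1,\ldots,b_l)$, $|B|=\sum_i b_i$. For a positive $m\times n$ matrix $G=(g_{ij})$ and vectors $x=(\xi_1,\ldots,\xi_m)$, $y=(\eta_1,\ldots,\eta_n)$, let $F(G;x,y)=\sum_{i=1}^m\sum_{j=1}^n g_{ij}\xi_i\eta_j$. For positive vectors $R=(r_1,\ldots,r_m)$, $C=(c_1,\ldots,c_n)$, let $f(G;R,C)$ be the minimum of $F(G;x,y)$ over all $x\in\mathbb{R}_{>0}^m$, $y\in\mathbb{R}_{>0}^n$ with $\prod_{i=1}^m\xi_i^{r_i}=\prod_{j=1}^n\eta_j^{c_j}=1$ (this minimum is attained). *)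

theory Defs
  imports "HOL-Analysis.Analysis"
begin

text \<open>Matrices are functions nat => nat => real (entries g i j with i < m, j < n),
  vectors are functions nat => real (entries with index below the length).\<close>

definition vabs :: "nat \<Rightarrow> (nat \<Rightarrow> real) \<Rightarrow> real" where
  "vabs l B = (\<Sum>i<l. B i)"

definition Fform :: "nat \<Rightarrow> nat \<Rightarrow> (nat \<Rightarrow> nat \<Rightarrow> real) \<Rightarrow> (nat \<Rightarrow> real) \<Rightarrow> (nat \<Rightarrow> real) \<Rightarrow> real" where
  "Fform m n G x y = (\<Sum>i<m. \<Sum>j<n. G i j * x i * y j)"

text \<open>f(G;R,C): the minimum (= infimum, since it is attained) of F(G;x,y) over positive
  x, y with prod xi_i^{r_i} = prod eta_j^{c_j} = 1.\<close>
definition fmin :: "nat \<Rightarrow> nat \<Rightarrow> (nat \<Rightarrow> nat \<Rightarrow> real) \<Rightarrow> (nat \<Rightarrow> real) \<Rightarrow> (nat \<Rightarrow> real) \<Rightarrow> real" where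
  "fmin m n G R C = Inf {Fform m n G x y | x y.
      (\<forall>i<m. x i > 0) \<and> (\<forall>j<n. y j > 0) \<and>
      (\<Prod>i<m. x i powr R i) = 1 \<and> (\<Prod>j<n. y j powr C j) = 1}"

end

theory Submission imports Defs begin

abbreviation fset where "fset m n G R C \<equiv> {Fform m n G x y | x y.
      (\<forall>i<m. x i > 0) \<and> (\<forall>j<n. y j > 0) \<and>
      (\<Prod>i<m. x i powr R i) = 1 \<and> (\<Prod>j<n. y j powr C j) = 1}"

lemma Fform_pos:
  assumes "m \<ge> 1" "n \<ge> 1" "\<forall>i<m. \<forall>j<n. G i j > 0" "\<forall>i<m. x i > 0" "\<forall>j<n. y j > 0"
  shows "Fform m n G x y > 0"
proof -
  have "m \<noteq> 0" "n \<noteq> 0" using assms by auto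
  have "0 < (\<Sum>i<m. \<Sum>j<n. G i j * x i * y j)"
    using assms \<open>m \<noteq> 0\<close> \<open>n \<noteq> 0\<close> by (intro sum_pos) (auto intro!: sum_pos mult_pos_pos simp: lessThan_empty_iff)
  then show ?thesis by (simp add: Fform_def)
qed

lemma Fform_nonneg:
  assumes "\<forall>i<m. \<forall>j<n. G i j > 0" "\<forall>i<m. x i > 0" "\<forall>j<n. y j > 0"
  shows "Fform m n G x y \<ge> 0"
  unfolding Fform_def
proof (intro sum_nonneg)
  fix i j assume "i \<in> {..<m}" "j \<in> {..<n}"
  then have "G i j > 0" "x i > 0" "y j > 0" using assms by auto
  then show "0 \<le> G i j * x i * y j" by simp
qed

lemma fmin_set_bdd:
  assumes "\<forall>i<m. \<forall>j<n. G i j > 0"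
  shows "bdd_below (fset m n G R C)"
proof (rule bdd_belowI[of _ 0])
  fix z assume "z \<in> fset m n G R C"
  then obtain x y where "z = Fform m n G x y" "\<forall>i<m. x i > 0" "\<forall>j<n. y j > 0" by blast
  then show "0 \<le> z" using assms Fform_nonneg by simp
qed

lemma fmin_set_ne: "fset m n G R C \<noteq> {}"
proof -
  have "Fform m n G (\<lambda>_. 1) (\<lambda>_. 1) \<in> fset m n G R C" by force
  then show ?thesis by blast
qed

lemma fmin_nonneg:
  assumes "\<forall>i<m. \<forall>j<n. G i j > 0"
  shows "fmin m n G R C \<ge> 0"
  unfolding fmin_def
  using fmin_set_ne
proof (rule cInf_greatest)
  fix z assume "z \<in> fset m n G R C"
  then obtain x y where "z = Fform m n G x y" "\<forall>i<m. x i > 0" "\<forall>j<n. y j > 0" by blast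
  then show "0 \<le> z" using assms Fform_nonneg by simp
qed

lemma ln_prod_powr:
  fixes x R :: "nat \<Rightarrow> real"
  assumes "\<forall>i<m. x i > 0"
  shows "(\<Prod>i<m. x i powr R i) = exp (\<Sum>i<m. R i * ln (x i))"
proof -
  have "(\<Prod>i<m. x i powr R i) = (\<Prod>i<m. exp (R i * ln (x i)))"
  proof (rule prod.cong)
    fix i assume "i \<in> {..<m}"
    then have "x i > 0" using assms by auto
    then show "x i powr R i = exp (R i * ln (x i))" by (simp add: powr_def)
  qed simp
  then show ?thesis by (simp add: exp_sum)
qed

lemma scale:
  assumes G: "\<forall>i<m. \<forall>j<n. G i j > 0" and N: "N > 0"
    and R: "vabs m R = N" and C: "vabs n C = N"
    and x: "\<forall>i<m. x i > 0" and y: "\<forall>j<n. y j > 0"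
  shows "Fform m n G x y \<ge> fmin m n G R C * exp ((\<Sum>i<m. R i * ln (x i)) / N)
            * exp ((\<Sum>j<n. C j * ln (y j)) / N)"
proof -
  define a where "a = exp ((\<Sum>i<m. R i * ln (x i)) / N)"
  define b where "b = exp ((\<Sum>j<n. C j * ln (y j)) / N)"
  define x' where "x' = (\<lambda>i. x i / a)"
  define y' where "y' = (\<lambda>j. y j / b)"
  have a: "a > 0" and b: "b > 0" by (auto simp: a_def b_def)
  have x': "\<forall>i<m. x' i > 0" using x a by (auto simp: x'_def)
  have y': "\<forall>j<n. y' j > 0" using y b by (auto simp: y'_def)
  have "(\<Sum>i<m. R i * ln (x' i)) = (\<Sum>i<m. R i * ln (x i)) - (\<Sum>i<m. R i) * ln a"
  proof -
    have "(\<Sum>i<m. R i * ln (x' i)) = (\<Sum>i<m. R i * ln (x i) - R i * ln a)"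
      using x a by (intro sum.cong) (auto simp: x'_def ln_div right_diff_distrib)
    then show ?thesis by (simp add: sum_subtractf sum_distrib_right)
  qed
  also have "\<dots> = 0" using R N by (simp add: a_def vabs_def)
  finally have px: "(\<Prod>i<m. x' i powr R i) = 1" using ln_prod_powr[OF x'] by simp
  have "(\<Sum>j<n. C j * ln (y' j)) = (\<Sum>j<n. C j * ln (y j)) - (\<Sum>j<n. C j) * ln b"
  proof -
    have "(\<Sum>j<n. C j * ln (y' j)) = (\<Sum>j<n. C j * ln (y j) - C j * ln b)"
      using y b by (intro sum.cong) (auto simp: y'_def ln_div right_diff_distrib)
    then show ?thesis by (simp add: sum_subtractf sum_distrib_right)
  qed
  also have "\<dots> = 0" using C N by (simp add: b_def vabs_def)
  finally have py: "(\<Prod>j<n. y' j powr C j) = 1" using ln_prod_powr[OF y'] by simp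
  have "fmin m n G R C \<le> Fform m n G x' y'"
    unfolding fmin_def using x' y' px py
    by (intro cInf_lower[OF _ fmin_set_bdd[OF G]]) blast
  moreover have "Fform m n G x y = a * b * Fform m n G x' y'"
    using a b by (simp add: Fform_def x'_def y'_def sum_distrib_left algebra_simps)
  ultimately show ?thesis using a b unfolding a_def[symmetric] b_def[symmetric]
    by (simp add: mult.commute mult_left_mono)
qed


theorem lemma4p2:
  fixes m n p :: nat
    and Gs :: "nat \<Rightarrow> nat \<Rightarrow> nat \<Rightarrow> real"
    and Rs Cs :: "nat \<Rightarrow> nat \<Rightarrow> real"
    and \<alpha> :: "nat \<Rightarrow> real"
  assumes "m \<ge> 1" and "n \<ge> 1" and "p \<ge> 1"
    and Gpos: "\<forall>k<p. \<forall>i<m. \<forall>j<n. Gs k i j > 0"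
    and Rpos: "\<forall>k<p. \<forall>i<m. Rs k i > 0"
    and Cpos: "\<forall>k<p. \<forall>j<n. Cs k j > 0"
    and sums: "\<forall>k<p. vabs m (Rs k) = vabs m (Rs 0) \<and> vabs n (Cs k) = vabs m (Rs 0)"
    and apos: "\<forall>k<p. \<alpha> k \<ge> 0"
    and asum: "(\<Sum>k<p. \<alpha> k) = 1"
  shows "fmin m n (\<lambda>i j. \<Sum>k<p. \<alpha> k * Gs k i j) (\<lambda>i. \<Sum>k<p. \<alpha> k * Rs k i)
           (\<lambda>j. \<Sum>k<p. \<alpha> k * Cs k j)
         \<ge> (\<Prod>k<p. fmin m n (Gs k) (Rs k) (Cs k) powr \<alpha> k)"
proof -
  define N where "N = vabs m (Rs 0)"
  define f where "f = (\<lambda>k. fmin m n (Gs k) (Rs k) (Cs k))"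
  define P where "P = (\<Prod>k<p. f k powr \<alpha> k)"
  have "0 < p" using assms by auto
  have N: "N > 0" unfolding N_def vabs_def using Rpos \<open>0 < p\<close> \<open>m \<ge> 1\<close>
    by (intro sum_pos) (auto simp: lessThan_empty_iff)
  have fnn: "f k \<ge> 0" if "k < p" for k
    unfolding f_def using Gpos that by (intro fmin_nonneg) auto
  have main: "P \<le> z" if z: "z \<in> fset m n (\<lambda>i j. \<Sum>k<p. \<alpha> k * Gs k i j) (\<lambda>i. \<Sum>k<p. \<alpha> k * Rs k i)
           (\<lambda>j. \<Sum>k<p. \<alpha> k * Cs k j)" for z
  proof -
    obtain x y where zxy: "z = Fform m n (\<lambda>i j. \<Sum>k<p. \<alpha> k * Gs k i j) x y"
      and x: "\<forall>i<m. x i > 0" and y: "\<forall>j<n. y j > 0"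
      and px: "(\<Prod>i<m. x i powr (\<Sum>k<p. \<alpha> k * Rs k i)) = 1"
      and py: "(\<Prod>j<n. y j powr (\<Sum>k<p. \<alpha> k * Cs k j)) = 1"
      using z by blast
    define F where "F = (\<lambda>k. Fform m n (Gs k) x y)"
    have Fpos: "F k > 0" if "k < p" for k
      unfolding F_def using assms that x y by (intro Fform_pos) auto
    have zF: "z = (\<Sum>k<p. \<alpha> k * F k)"
    proof -
      have "z = (\<Sum>i<m. \<Sum>j<n. \<Sum>k<p. \<alpha> k * Gs k i j * x i * y j)"
        unfolding zxy Fform_def by (simp add: sum_distrib_right)
      also have "\<dots> = (\<Sum>i<m. \<Sum>k<p. \<Sum>j<n. \<alpha> k * Gs k i j * x i * y j)"
        by (intro sum.cong refl sum.swap)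
      also have "\<dots> = (\<Sum>k<p. \<Sum>i<m. \<Sum>j<n. \<alpha> k * Gs k i j * x i * y j)"
        by (rule sum.swap)
      also have "\<dots> = (\<Sum>k<p. \<alpha> k * F k)"
        unfolding F_def Fform_def by (simp add: sum_distrib_left mult.assoc)
      finally show ?thesis .
    qed
    show "P \<le> z"
    proof (cases "\<exists>k<p. f k = 0")
      case True
      then have "P = 0" unfolding P_def by (auto intro: prod_zero)
      moreover have "z \<ge> 0" unfolding zF using Fpos apos
        by (intro sum_nonneg) (metis lessThan_iff less_imp_le mult_nonneg_nonneg)
      ultimately show ?thesis by simp
    next
      case False
      have fpos: "f k > 0" if "k < p" for k
      proof -
        have "f k \<noteq> 0" using False that by blast
        then show ?thesis using fnn[OF that] by linarith
      qed
      define Lx where "Lx = (\<lambda>k. \<Sum>i<m. Rs k i * ln (x i))"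
      define Ly where "Ly = (\<lambda>k. \<Sum>j<n. Cs k j * ln (y j))"
      have lnF: "ln (F k) \<ge> ln (f k) + Lx k / N + Ly k / N" if "k < p" for k
      proof -
        have "F k \<ge> f k * exp (Lx k / N) * exp (Ly k / N)"
        proof -
          have v: "vabs m (Rs k) = N" "vabs n (Cs k) = N" using spec[OF sums, of k] that unfolding N_def by (blast, blast)
          have g: "\<forall>i<m. \<forall>j<n. Gs k i j > 0" using Gpos that by auto
          show ?thesis unfolding F_def f_def Lx_def Ly_def by (rule scale[OF g N v x y])
        qed
        moreover have pos: "0 < f k * exp (Lx k / N) * exp (Ly k / N)"
          using fpos[OF that] by simp
        ultimately have "ln (f k * exp (Lx k / N) * exp (Ly k / N)) \<le> ln (F k)"
          using ln_le_cancel_iff Fpos[OF that] by blast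
        moreover have "ln (f k * exp (Lx k / N) * exp (Ly k / N)) = ln (f k) + Lx k / N + Ly k / N"
          using fpos[OF that] by (simp add: ln_mult)
        ultimately show ?thesis by simp
      qed
      have "ln z \<ge> (\<Sum>k<p. \<alpha> k * ln (F k))"
        unfolding zF
        using concave_on_sum[where S="{..<p}" and f=ln and C="{0<..}" and a=\<alpha> and y=F] ln_concave apos asum Fpos \<open>0<p\<close>
        by auto
      moreover have "(\<Sum>k<p. \<alpha> k * ln (F k)) \<ge> (\<Sum>k<p. \<alpha> k * (ln (f k) + Lx k / N + Ly k / N))"
        using lnF apos by (intro sum_mono mult_left_mono) auto
      moreover have "(\<Sum>k<p. \<alpha> k * Lx k) = 0"
      proof -
        have "(\<Sum>k<p. \<alpha> k * Lx k) = (\<Sum>i<m. (\<Sum>k<p. \<alpha> k * Rs k i) * ln (x i))"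
          unfolding Lx_def by (simp add: sum_distrib_left sum_distrib_right mult.assoc sum.swap[of _ "{..<p}"])
        also have "\<dots> = 0" using px ln_prod_powr[OF x, of "\<lambda>i. \<Sum>k<p. \<alpha> k * Rs k i"] by simp
        finally show ?thesis .
      qed
      moreover have "(\<Sum>k<p. \<alpha> k * Ly k) = 0"
      proof -
        have "(\<Sum>k<p. \<alpha> k * Ly k) = (\<Sum>j<n. (\<Sum>k<p. \<alpha> k * Cs k j) * ln (y j))"
          unfolding Ly_def by (simp add: sum_distrib_left sum_distrib_right mult.assoc sum.swap[of _ "{..<p}"])
        also have "\<dots> = 0" using py ln_prod_powr[OF y, of "\<lambda>j. \<Sum>k<p. \<alpha> k * Cs k j"] by simp
        finally show ?thesis .
      qed
      moreover have "(\<Sum>k<p. \<alpha> k * (ln (f k) + Lx k / N + Ly k / N))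
          = (\<Sum>k<p. \<alpha> k * ln (f k)) + (\<Sum>k<p. \<alpha> k * Lx k) / N + (\<Sum>k<p. \<alpha> k * Ly k) / N"
        by (simp add: distrib_left sum.distrib sum_divide_distrib)
      ultimately have lnz: "ln z \<ge> (\<Sum>k<p. \<alpha> k * ln (f k))" by simp
      have "\<exists>k0<p. \<alpha> k0 > 0"
      proof (rule ccontr)
        assume na: "\<not> (\<exists>k0<p. \<alpha> k0 > 0)"
        have "\<alpha> k = 0" if "k < p" for k
        proof -
          have "\<not> \<alpha> k > 0" using na that by blast
          moreover have "\<alpha> k \<ge> 0" using apos that by blast
          ultimately show ?thesis by linarith
        qed
        then have "(\<Sum>k<p. \<alpha> k) = 0" by simp
        then show False using asum by simp
      qed
      then obtain k0 where k0: "k0 < p" "\<alpha> k0 > 0" by blast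
      have zpos: "z > 0" unfolding zF
      proof (rule sum_pos2[of _ k0])
        show "0 < \<alpha> k0 * F k0" using k0 Fpos by simp
        show "0 \<le> \<alpha> i * F i" if "i \<in> {..<p}" for i
          using that apos Fpos[of i] by simp
      qed (use k0 in auto)
      have "P = exp (\<Sum>k<p. \<alpha> k * ln (f k))"
        unfolding P_def exp_sum[OF finite_lessThan]
      proof (rule prod.cong[OF refl])
        fix k assume "k \<in> {..<p}"
        then have "f k > 0" using fpos by simp
        then show "f k powr \<alpha> k = exp (\<alpha> k * ln (f k))" by (simp add: powr_def)
      qed
      also have "\<dots> \<le> exp (ln z)" using lnz by simp
      also have "\<dots> = z" using zpos by simp
      finally show ?thesis .
    qed
  qed
  have "P \<le> fmin m n (\<lambda>i j. \<Sum>k<p. \<alpha> k * Gs k i j) (\<lambda>i. \<Sum>k<p. \<alpha> k * Rs k i)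
           (\<lambda>j. \<Sum>k<p. \<alpha> k * Cs k j)"
    unfolding fmin_def by (rule cInf_greatest[OF fmin_set_ne main])
  then show ?thesis unfolding P_def f_def .
qed

end
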